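(* Let $a,b>0$. (i) If $0\le v\le 1/2$ and $a\ge b$, then $L(a,b)\le \frac{1}{2}A_v(a,b)+\frac{1}{2}G_v(a,b)$. (ii) If $1/2\le v\le 1$ and $a\le b$, then $L(a,b)\le \frac{1}{2}A_v(a,b)+\frac{1}{2}G_v(a,b)$.
   Context: For $a,b>0$ and $0\le v\le 1$: $A_v(a,b):=(1-v)a+vb$, $G_v(a,b):=a^{1-v}b^v$, and the logarithmic mean $L(a,b):=\frac{a-b}{\log a-\log b}$ for $a\neq b$, $L(a,a):=a$. *)

theory Defs
  imports Complex_Main
begin

definition A_mean :: "real \<Rightarrow> real \<Rightarrow> real \<Rightarrow> real" where
  "A_mean v a b = (1 - v) * a + v * b"

definition G_mean :: "real \<Rightarrow> real \<Rightarrow> real \<Rightarrow> real" where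
  "G_mean v a b = a powr (1 - v) * b powr v"

definition L_mean :: "real \<Rightarrow> real \<Rightarrow> real" where
  "L_mean a b = (if a = b then a else (a - b) / (ln a - ln b))"

end

theory Submission
  imports Defs
begin

lemma ln_lower:
  fixes x :: real
  assumes "x \<ge> 1"
  shows "2 * (x - 1) / (x + 1) \<le> ln x"
proof -
  let ?f = "\<lambda>t::real. ln t - 2 * (t - 1) / (t + 1)"
  have "?f 1 \<le> ?f x"
  proof (rule DERIV_nonneg_imp_increasing_open[OF assms])
    fix t :: real assume t: "1 < t" "t < x"
    have d: "DERIV ?f t :> (1 / t - (2 * (t + 1) - 2 * (t - 1)) / (t + 1)^2)"
      using t by (auto intro!: derivative_eq_intros simp: power2_eq_square)
    have sq: "4 * t \<le> (t + 1)^2"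
    proof -
      have "(t + 1)^2 - 4 * t = (t - 1)^2" by (simp add: power2_eq_square algebra_simps)
      then show ?thesis by (smt (verit) zero_le_power2)
    qed
    have e: "(2 * (t + 1) - 2 * (t - 1)) / (t + 1)^2 = 4 / (t + 1)^2" by simp
    have "4 / (t + 1)^2 \<le> 1 / t" using t sq by (simp add: divide_simps)
    then have "1 / t - (2 * (t + 1) - 2 * (t - 1)) / (t + 1)^2 \<ge> 0" using e by simp
    then show "\<exists>y. DERIV ?f t :> y \<and> y \<ge> 0" using d by blast
  next
    show "continuous_on {1..x} ?f"
      by (intro continuous_intros) auto
  qed
  then show ?thesis by simp
qed

lemma L_bound:
  fixes a b :: real
  assumes "b > 0" "a \<ge> b"
  shows "L_mean a b \<le> (sqrt a + sqrt b)^2 / 4"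
proof (cases "a = b")
  case True
  then show ?thesis using assms by (simp add: L_mean_def power2_eq_square algebra_simps)
next
  case False
  then have ab: "a > b" using assms by simp
  define p where "p = sqrt a"
  define q where "q = sqrt b"
  have q: "q > 0" using assms q_def by simp
  have pq: "p > q" using ab assms p_def q_def by (simp add: real_sqrt_less_iff)
  have a: "a = p^2" "b = q^2" using assms p_def q_def by auto
  define x where "x = p / q"
  have x1: "x > 1" using pq q x_def by simp
  have lnab: "ln a - ln b = 2 * ln x"
    using a q pq x_def by (simp add: ln_div ln_realpow)
  have lx: "2 * (x - 1) / (x + 1) \<le> ln x" using ln_lower x1 by simp
  have lxpos: "2 * (x - 1) / (x + 1) > 0" using x1 by simp
  have "L_mean a b = (a - b) / (2 * ln x)" using False lnab by (simp add: L_mean_def)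
  also have "\<dots> \<le> (a - b) / (2 * (2 * (x - 1) / (x + 1)))"
  proof (rule divide_left_mono)
    show "2 * (2 * (x - 1) / (x + 1)) \<le> 2 * ln x" using lx by linarith
    show "0 \<le> a - b" using ab by simp
    have "0 < 2 * ln x" using lx lxpos by linarith
    then show "0 < 2 * ln x * (2 * (2 * (x - 1) / (x + 1)))" using lxpos by (intro mult_pos_pos) auto
  qed
  also have "\<dots> = (p + q)^2 / 4"
    using q pq x1 unfolding a x_def by (simp add: field_simps power2_eq_square)
  finally show ?thesis using p_def q_def by simp
qed

lemma main:
  fixes a b v :: real
  assumes "b > 0" "a \<ge> b" "0 \<le> v" "v \<le> 1/2"
  shows "L_mean a b \<le> A_mean v a b / 2 + G_mean v a b / 2"
proof -
  have a0: "a > 0" using assms by simp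
  have A: "A_mean v a b \<ge> (a + b) / 2"
  proof -
    have "(1 - v) * a + v * b - (a + b) / 2 = (1/2 - v) * (a - b)" by (simp add: field_simps)
    also have "\<dots> \<ge> 0" using assms by simp
    finally show ?thesis by (simp add: A_mean_def)
  qed
  have G: "G_mean v a b \<ge> sqrt a * sqrt b"
  proof -
    have e1: "a powr (1 - v) = a powr (1/2) * a powr (1/2 - v)"
      by (simp add: powr_add[symmetric])
    have e2: "b powr (1/2) = b powr v * b powr (1/2 - v)"
      by (simp add: powr_add[symmetric])
    have m: "b powr (1/2 - v) \<le> a powr (1/2 - v)"
      using assms by (intro powr_mono2) auto
    have "sqrt a * sqrt b = a powr (1/2) * (b powr v * b powr (1/2 - v))"
      using a0 assms e2 by (simp add: powr_half_sqrt)
    also have "\<dots> \<le> a powr (1/2) * (b powr v * a powr (1/2 - v))"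
      using m by (intro mult_left_mono) auto
    also have "\<dots> = G_mean v a b" unfolding G_mean_def e1 by (simp add: algebra_simps)
    finally show ?thesis .
  qed
  have "(sqrt a + sqrt b)^2 / 4 = ((a + b) / 2) / 2 + (sqrt a * sqrt b) / 2"
    using a0 assms by (simp add: power2_eq_square algebra_simps)
  then show ?thesis using L_bound[OF assms(1,2)] A G by linarith
qed

theorem proposition3p1:
  fixes a b v :: real
  assumes "a > 0" and "b > 0"
  shows "(0 \<le> v \<and> v \<le> 1/2 \<and> a \<ge> b \<longrightarrow>
            L_mean a b \<le> A_mean v a b / 2 + G_mean v a b / 2)
       \<and> (1/2 \<le> v \<and> v \<le> 1 \<and> a \<le> b \<longrightarrow>
            L_mean a b \<le> A_mean v a b / 2 + G_mean v a b / 2)"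
proof safe
  assume "0 \<le> v" "v \<le> 1/2" "a \<ge> b"
  then show "L_mean a b \<le> A_mean v a b / 2 + G_mean v a b / 2"
    using main assms by simp
next
  assume h: "1/2 \<le> v" "v \<le> 1" "a \<le> b"
  have "L_mean b a \<le> A_mean (1 - v) b a / 2 + G_mean (1 - v) b a / 2"
    using main[of a b "1 - v"] h assms by simp
  moreover have "L_mean b a = L_mean a b"
    by (simp add: L_mean_def) (simp add: divide_simps algebra_simps)
  moreover have "A_mean (1 - v) b a = A_mean v a b" by (simp add: A_mean_def algebra_simps)
  moreover have "G_mean (1 - v) b a = G_mean v a b" by (simp add: G_mean_def algebra_simps)
  ultimately show "L_mean a b \<le> A_mean v a b / 2 + G_mean v a b / 2" by simp
qed

end
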